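(* The set $R_{1,1,1}$ of Riordan matrices whose $A$-sequence has the form $(1,a_1,a_2,\ldots)$ and whose $Z$-sequence has the form $(z_0,0,z_2,\ldots)$ with $z_0=a_1$ (i.e. $a_0=1$, $z_0=a_1$, $z_1=0$) is a subgroup of the Riordan group.
   Context: Let $K$ be $\mathbb{R}$ or $\mathbb{C}$. A (proper) Riordan matrix is a pair $(g,f)$ of formal power series in $K[[t]]$ with $g(0)=1$, $f(0)=0$, $f'(0)\neq 0$ (the normalization $g(0)=1$ is a standing assumption), identified with the lower triangular matrix with entries $[t^n]g(t)f(t)^k$. The Riordan group is the set of these matrices under matrix multiplication, $(g_1,f_1)(g_2,f_2)=(g_1\,g_2(f_1),\,f_2(f_1))$, with identity $(1,t)$. The $A$-sequence $(a_j)$ of $(g,f)$ is the unique sequence whose generating function $A(t)$ satisfies $f(t)=tA(f(t))$; the $Z$-sequence $(z_j)$ is the unique sequence whose generating function $Z(t)$ satisfies $g(t)=1/(1-tZ(f(t)))$. *)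

theory Defs
  imports "HOL-Computational_Algebra.Formal_Power_Series" "HOL-Algebra.Group"
begin

text \<open>A (proper) Riordan matrix is represented by the pair (g, f) of formal power series.\<close>

definition riordan_pair :: "('a::field fps \<times> 'a fps) \<Rightarrow> bool" where
  "riordan_pair p \<longleftrightarrow> fps_nth (fst p) 0 = 1 \<and> fps_nth (snd p) 0 = 0 \<and> fps_nth (snd p) 1 \<noteq> 0"

definition riordan_mult :: "('a::field fps \<times> 'a fps) \<Rightarrow> ('a fps \<times> 'a fps) \<Rightarrow> ('a fps \<times> 'a fps)" where
  "riordan_mult p q = (fst p * (fst q oo snd p), snd q oo snd p)"

definition riordan_group :: "('a::field fps \<times> 'a fps) monoid" where
  "riordan_group = \<lparr>carrier = {p. riordan_pair p}, mult = riordan_mult, one = (1, fps_X)\<rparr>"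

definition A_seq :: "('a::field fps \<times> 'a fps) \<Rightarrow> 'a fps" where
  "A_seq p = (THE A. snd p = fps_X * (A oo snd p))"

definition Z_seq :: "('a::field fps \<times> 'a fps) \<Rightarrow> 'a fps" where
  "Z_seq p = (THE Z. fst p = inverse (1 - fps_X * (Z oo snd p)))"

definition R111 :: "('a::field fps \<times> 'a fps) set" where
  "R111 = {p. riordan_pair p \<and> fps_nth (A_seq p) 0 = 1
              \<and> fps_nth (Z_seq p) 0 = fps_nth (A_seq p) 1 \<and> fps_nth (Z_seq p) 1 = 0}"

end

theory Submission imports Defs begin
unbundle fps_syntax

lemma comp_nth1: "(b::'a::field fps) $ 0 = 0 \<Longrightarrow> (a oo b) $ 1 = a$1 * b$1"
  by (simp add: fps_compose_nth)

lemma comp_nth2: "(b::'a::field fps) $ 0 = 0 \<Longrightarrow> (a oo b) $ 2 = a$1 * b$2 + a$2 * (b$1)^2"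
  by (simp add: fps_compose_nth numeral_2_eq_2 fps_mult_nth power2_eq_square)

lemma comp_nth1S: "(b::'a::field fps) $ 0 = 0 \<Longrightarrow> (a oo b) $ Suc 0 = a$Suc 0 * b$Suc 0"
  by (simp add: fps_compose_nth)

lemma mult_nth1: "((a::'a::field fps) * b) $ 1 = a$0 * b$1 + a$1 * b$0"
  by (simp add: fps_mult_nth)

lemma mult_nth2: "((a::'a::field fps) * b) $ 2 = a$0 * b$2 + a$1 * b$1 + a$2 * b$0"
  by (simp add: fps_mult_nth numeral_2_eq_2)

lemma inv_nth0: "fps_inv (a::'a::field fps) $ 0 = 0"
  by (simp add: fps_inv_def)

lemma inv_nth1: "(a::'a::field fps) $ 0 = 0 \<Longrightarrow> a $ 1 \<noteq> 0 \<Longrightarrow> fps_inv a $ 1 = 1 / a$1"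
proof -
  assume h: "a $ 0 = 0" "a $ 1 \<noteq> 0"
  have "(a oo fps_inv a) $ 1 = 1" using fps_inv_right[OF h] by simp
  moreover have "(a oo fps_inv a) $ 1 = a$1 * fps_inv a $ 1" by (rule comp_nth1[OF inv_nth0])
  ultimately show ?thesis using h by (simp add: field_simps)
qed

lemma X_shift: "(h::'a::field fps) $ 0 = 0 \<Longrightarrow> fps_X * fps_shift 1 h = h"
  by (rule fps_ext) (auto simp: fps_X_mult_nth)

lemma X_cancel: "fps_X * (u::'a::field fps) = fps_X * v \<Longrightarrow> u = v"
  by simp

lemma comp_cancel:
  assumes f0: "(f::'a::field fps) $ 0 = 0" and f1: "f $ 1 \<noteq> 0" and e: "A oo f = B oo f"
  shows "A = B"
proof -
  have i0: "fps_inv f $ 0 = 0" by (rule inv_nth0)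
  have "A = A oo (f oo fps_inv f)" using fps_inv_right[OF f0 f1] by simp
  also have "\<dots> = (A oo f) oo fps_inv f" by (rule fps_compose_assoc[OF i0 f0])
  also have "\<dots> = (B oo f) oo fps_inv f" using e by simp
  also have "\<dots> = B oo (f oo fps_inv f)" by (rule fps_compose_assoc[OF i0 f0, symmetric])
  also have "\<dots> = B" using fps_inv_right[OF f0 f1] by simp
  finally show ?thesis .
qed

lemma A_char:
  assumes "riordan_pair (p::'a::field fps \<times> 'a fps)"
  shows "snd p = fps_X * (A_seq p oo snd p)"
proof -
  define f where "f = snd p"
  have f0: "f $ 0 = 0" and f1: "f $ 1 \<noteq> 0" using assms by (auto simp: riordan_pair_def f_def)
  define A0 where "A0 = fps_shift 1 f oo fps_inv f"
  have "A0 oo f = fps_shift 1 f oo (fps_inv f oo f)"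
    unfolding A0_def by (rule fps_compose_assoc[OF f0 inv_nth0, symmetric])
  also have "\<dots> = fps_shift 1 f" using fps_inv[OF f0 f1] by simp
  finally have ex: "f = fps_X * (A0 oo f)" using X_shift[OF f0] by simp
  have "\<exists>!A. f = fps_X * (A oo f)"
  proof
    show "f = fps_X * (A0 oo f)" by (rule ex)
    fix A assume "f = fps_X * (A oo f)"
    then have "A oo f = A0 oo f" using ex X_cancel by metis
    then show "A = A0" by (rule comp_cancel[OF f0 f1])
  qed
  then show ?thesis unfolding A_seq_def f_def[symmetric] by (rule theI')
qed

lemma Z_char:
  assumes "riordan_pair (p::'a::field fps \<times> 'a fps)"
  shows "fst p = inverse (1 - fps_X * (Z_seq p oo snd p))"
proof -
  define f where "f = snd p"
  define g where "g = fst p"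
  have f0: "f $ 0 = 0" and f1: "f $ 1 \<noteq> 0" and g0: "g $ 0 = 1"
    using assms by (auto simp: riordan_pair_def f_def g_def)
  define h where "h = 1 - inverse g"
  have h0: "h $ 0 = 0" using g0 by (simp add: h_def)
  define Z0 where "Z0 = fps_shift 1 h oo fps_inv f"
  have "Z0 oo f = fps_shift 1 h oo (fps_inv f oo f)"
    unfolding Z0_def by (rule fps_compose_assoc[OF f0 inv_nth0, symmetric])
  also have "\<dots> = fps_shift 1 h" using fps_inv[OF f0 f1] by simp
  finally have e1: "fps_X * (Z0 oo f) = h" using X_shift[OF h0] by simp
  have uniq: "fps_X * (Z oo f) = h" if "g = inverse (1 - fps_X * (Z oo f))" for Z
  proof -
    have "(1 - fps_X * (Z oo f)) $ 0 \<noteq> 0" by simp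
    then have "inverse g = 1 - fps_X * (Z oo f)" using that by simp
    then show ?thesis by (simp add: h_def)
  qed
  have "\<exists>!Z. g = inverse (1 - fps_X * (Z oo f))"
  proof
    have "1 - fps_X * (Z0 oo f) = inverse g" using e1 by (simp add: h_def)
    then show "g = inverse (1 - fps_X * (Z0 oo f))" using g0 by simp
    fix Z assume "g = inverse (1 - fps_X * (Z oo f))"
    then have "fps_X * (Z oo f) = fps_X * (Z0 oo f)" using uniq e1 by simp
    then have "Z oo f = Z0 oo f" by (rule X_cancel)
    then show "Z = Z0" by (rule comp_cancel[OF f0 f1])
  qed
  then show ?thesis unfolding Z_seq_def f_def[symmetric] g_def[symmetric] by (rule theI')
qed

lemma A_coeffs:
  assumes "riordan_pair (p::'a::field fps \<times> 'a fps)"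
  shows "A_seq p $ 0 = snd p $ 1" "A_seq p $ 1 = snd p $ 2 / snd p $ 1"
proof -
  have f0: "snd p $ 0 = 0" and f1: "snd p $ 1 \<noteq> 0" using assms by (auto simp: riordan_pair_def)
  have e: "snd p = fps_X * (A_seq p oo snd p)" by (rule A_char[OF assms])
  have "snd p $ 1 = (fps_X * (A_seq p oo snd p)) $ 1" using e by metis
  then show "A_seq p $ 0 = snd p $ 1" by (simp add: fps_X_mult_nth)
  have "snd p $ 2 = (fps_X * (A_seq p oo snd p)) $ 2" using e by metis
  then have "snd p $ 2 = (A_seq p oo snd p) $ 1" by (simp add: fps_X_mult_nth)
  then show "A_seq p $ 1 = snd p $ 2 / snd p $ 1" using comp_nth1[OF f0] f1 by (simp add: field_simps)
qed

lemma Z_coeffs: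
  assumes "riordan_pair (p::'a::field fps \<times> 'a fps)"
  shows "Z_seq p $ 0 = fst p $ 1" "Z_seq p $ 1 = (fst p $ 2 - (fst p $ 1)^2) / snd p $ 1"
proof -
  have f0: "snd p $ 0 = 0" and f1: "snd p $ 1 \<noteq> 0" and g0: "fst p $ 0 = 1"
    using assms by (auto simp: riordan_pair_def)
  define u where "u = 1 - fps_X * (Z_seq p oo snd p)"
  have u0: "u $ 0 = 1" by (simp add: u_def)
  have "fst p = inverse u" using Z_char[OF assms] by (simp add: u_def)
  then have gu: "fst p * u = 1" using u0 by (simp add: inverse_mult_eq_1)
  have u1: "u $ 1 = - Z_seq p $ 0" by (simp add: u_def fps_X_mult_nth)
  have "u $ 2 = - (Z_seq p oo snd p) $ 1" by (simp add: u_def fps_X_mult_nth numeral_2_eq_2)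
  moreover have "(Z_seq p oo snd p) $ 1 = Z_seq p $ 1 * snd p $ 1" by (rule comp_nth1[OF f0])
  ultimately have u2: "u $ 2 = - Z_seq p $ 1 * snd p $ 1" by simp
  have z1: "(fst p * u) $ 1 = 0" and z2: "(fst p * u) $ 2 = 0" using gu by simp_all
  have c1: "Z_seq p $ 0 = fst p $ 1 - (fst p * u) $ 1"
    unfolding mult_nth1 u0 u1 g0 by simp
  show "Z_seq p $ 0 = fst p $ 1" using c1 z1 by simp
  show "Z_seq p $ 1 = (fst p $ 2 - (fst p $ 1)^2) / snd p $ 1"
  proof -
    have "Z_seq p $ 1 * snd p $ 1 = fst p $ 2 - fst p $ 1 * Z_seq p $ 0 - (fst p * u) $ 2"
      unfolding mult_nth2 u0 u2 u1 g0 by (simp add: algebra_simps)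
    then have "Z_seq p $ 1 * snd p $ 1 = fst p $ 2 - (fst p $ 1)^2" using z2 c1 z1 by (simp add: power2_eq_square)
    then show ?thesis using f1 by (simp add: field_simps)
  qed
qed

definition R111c :: "('a::field fps \<times> 'a fps) \<Rightarrow> bool" where
  "R111c p \<longleftrightarrow> riordan_pair p \<and> snd p $ 1 = 1 \<and> fst p $ 1 = snd p $ 2 \<and> fst p $ 2 = (fst p $ 1)^2"

lemma R111_eq: "R111 = {p::'a::field fps \<times> 'a fps. R111c p}"
proof -
  have "p \<in> R111 \<longleftrightarrow> R111c p" for p :: "'a fps \<times> 'a fps"
  proof (cases "riordan_pair p")
    case True
    have f1: "snd p $ 1 \<noteq> 0" using True by (simp add: riordan_pair_def)
    show ?thesis
      unfolding R111_def R111c_def using True A_coeffs[OF True] Z_coeffs[OF True] f1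
      by (auto simp: field_simps)
  next
    case False
    then show ?thesis by (simp add: R111_def R111c_def)
  qed
  then show ?thesis by auto
qed

lemma mult_pair: "riordan_pair p \<Longrightarrow> riordan_pair q \<Longrightarrow> riordan_pair (riordan_mult p q)"
  by (simp add: riordan_pair_def riordan_mult_def comp_nth1S)

lemma mult_coeffs:
  assumes "riordan_pair p" "riordan_pair (q::'a::field fps \<times> 'a fps)"
  shows "snd (riordan_mult p q) $ 1 = snd q $ 1 * snd p $ 1"
    "snd (riordan_mult p q) $ 2 = snd q $ 1 * snd p $ 2 + snd q $ 2 * (snd p $ 1)^2"
    "fst (riordan_mult p q) $ 1 = fst p $ 1 + fst q $ 1 * snd p $ 1"
    "fst (riordan_mult p q) $ 2 = fst p $ 2 + fst p $ 1 * fst q $ 1 * snd p $ 1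
        + fst q $ 1 * snd p $ 2 + fst q $ 2 * (snd p $ 1)^2"
proof -
  have f0: "snd p $ 0 = 0" and g0: "fst p $ 0 = 1" "fst q $ 0 = 1"
    using assms by (auto simp: riordan_pair_def)
  show "snd (riordan_mult p q) $ 1 = snd q $ 1 * snd p $ 1"
    by (simp add: riordan_mult_def comp_nth1S[OF f0])
  show "snd (riordan_mult p q) $ 2 = snd q $ 1 * snd p $ 2 + snd q $ 2 * (snd p $ 1)^2"
    by (simp add: riordan_mult_def comp_nth2[OF f0])
  show "fst (riordan_mult p q) $ 1 = fst p $ 1 + fst q $ 1 * snd p $ 1"
    unfolding riordan_mult_def fst_conv mult_nth1 comp_nth1[OF f0] using g0 by simp
  show "fst (riordan_mult p q) $ 2 = fst p $ 2 + fst p $ 1 * fst q $ 1 * snd p $ 1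
        + fst q $ 1 * snd p $ 2 + fst q $ 2 * (snd p $ 1)^2"
    unfolding riordan_mult_def fst_conv mult_nth2 comp_nth1[OF f0] comp_nth2[OF f0] using g0
    by (simp add: algebra_simps)
qed

lemma riordan_is_group: "group (riordan_group :: ('a::field fps \<times> 'a fps) monoid)"
proof (rule groupI)
  fix x y :: "'a fps \<times> 'a fps"
  assume "x \<in> carrier riordan_group" "y \<in> carrier riordan_group"
  then show "x \<otimes>\<^bsub>riordan_group\<^esub> y \<in> carrier riordan_group"
    by (simp add: riordan_group_def mult_pair)
next
  show "\<one>\<^bsub>riordan_group\<^esub> \<in> carrier (riordan_group :: ('a::field fps \<times> 'a fps) monoid)"
    by (simp add: riordan_group_def riordan_pair_def)
next
  fix x y z :: "'a fps \<times> 'a fps"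
  assume "x \<in> carrier riordan_group" "y \<in> carrier riordan_group" "z \<in> carrier riordan_group"
  then have x0: "snd x $ 0 = 0" and y0: "snd y $ 0 = 0"
    by (auto simp: riordan_group_def riordan_pair_def)
  have c0: "(snd y oo snd x) $ 0 = 0" using y0 by simp
  show "x \<otimes>\<^bsub>riordan_group\<^esub> y \<otimes>\<^bsub>riordan_group\<^esub> z =
        x \<otimes>\<^bsub>riordan_group\<^esub> (y \<otimes>\<^bsub>riordan_group\<^esub> z)"
    by (simp add: riordan_group_def riordan_mult_def fps_compose_mult_distrib[OF x0]
        fps_compose_assoc[OF x0 y0] mult.assoc)
next
  fix x :: "'a fps \<times> 'a fps"
  assume "x \<in> carrier riordan_group"
  then show "\<one>\<^bsub>riordan_group\<^esub> \<otimes>\<^bsub>riordan_group\<^esub> x = x"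
    by (simp add: riordan_group_def riordan_mult_def riordan_pair_def)
next
  fix x :: "'a fps \<times> 'a fps"
  assume "x \<in> carrier riordan_group"
  then have x0: "snd x $ 0 = 0" and x1: "snd x $ 1 \<noteq> 0" and g0: "fst x $ 0 = 1"
    by (auto simp: riordan_group_def riordan_pair_def)
  define y where "y = (inverse (fst x oo fps_inv (snd x)), fps_inv (snd x))"
  have i0: "fps_inv (snd x) $ 0 = 0" by (rule inv_nth0)
  have gi0: "(fst x oo fps_inv (snd x)) $ 0 = 1" using g0 by simp
  have "y \<in> carrier riordan_group"
    using inv_nth1[OF x0 x1] x1 gi0 i0
    by (simp add: y_def riordan_group_def riordan_pair_def)
  moreover have "y \<otimes>\<^bsub>riordan_group\<^esub> x = \<one>\<^bsub>riordan_group\<^esub>"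
    using gi0 fps_inv_right[OF x0 x1]
    by (simp add: y_def riordan_group_def riordan_mult_def
        fps_compose_assoc[OF x0 i0, symmetric] inverse_mult_eq_1)
  ultimately show "\<exists>y \<in> carrier riordan_group. y \<otimes>\<^bsub>riordan_group\<^esub> x = \<one>\<^bsub>riordan_group\<^esub>"
    by blast
qed

lemma one_R111c: "R111c ((1, fps_X) :: 'a::field fps \<times> 'a fps)"
  by (simp add: R111c_def riordan_pair_def)

lemma R111_subgroup: "subgroup (R111 :: ('a::field fps \<times> 'a fps) set) riordan_group"
proof -
  interpret G: group "riordan_group :: ('a fps \<times> 'a fps) monoid" by (rule riordan_is_group)
  show ?thesis
  proof (rule G.subgroupI)
    show "(R111 :: ('a fps \<times> 'a fps) set) \<subseteq> carrier riordan_group"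
      by (auto simp: R111_eq R111c_def riordan_group_def)
    show "(R111 :: ('a fps \<times> 'a fps) set) \<noteq> {}"
      using one_R111c R111_eq by blast
  next
    fix a b :: "'a fps \<times> 'a fps"
    assume "a \<in> R111" "b \<in> R111"
    then have a: "R111c a" and b: "R111c b" by (auto simp: R111_eq)
    then have pa: "riordan_pair a" and pb: "riordan_pair b" by (auto simp: R111c_def)
    have "R111c (riordan_mult a b)"
      using a b unfolding R111c_def mult_coeffs[OF pa pb]
      by (simp add: mult_pair power2_eq_square algebra_simps)
    then show "a \<otimes>\<^bsub>riordan_group\<^esub> b \<in> R111" by (simp add: R111_eq riordan_group_def)
  next
    fix a :: "'a fps \<times> 'a fps"
    assume aR: "a \<in> R111"
    then have a: "R111c a" by (auto simp: R111_eq)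
    then have pa: "riordan_pair a" by (auto simp: R111c_def)
    have ac: "a \<in> carrier riordan_group" using pa by (simp add: riordan_group_def)
    define q where "q = inv\<^bsub>riordan_group\<^esub> a"
    have "q \<in> carrier riordan_group" unfolding q_def using ac by simp
    then have pq: "riordan_pair q" by (simp add: riordan_group_def)
    have "a \<otimes>\<^bsub>riordan_group\<^esub> q = \<one>\<^bsub>riordan_group\<^esub>" unfolding q_def using ac by simp
    then have m: "riordan_mult a q = (1, fps_X)" by (simp add: riordan_group_def)
    have a1: "snd a $ 1 = 1" and a2: "fst a $ 1 = snd a $ 2" and a3: "fst a $ 2 = (fst a $ 1)^2"
      using a by (auto simp: R111c_def)
    have e1: "snd q $ 1 * snd a $ 1 = 1" using mult_coeffs(1)[OF pa pq] m by simp
    have e2: "snd q $ 1 * snd a $ 2 + snd q $ 2 * (snd a $ 1)^2 = 0"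
      using mult_coeffs(2)[OF pa pq] m by simp
    have e3: "fst a $ 1 + fst q $ 1 * snd a $ 1 = 0" using mult_coeffs(3)[OF pa pq] m by simp
    have e4: "fst a $ 2 + fst a $ 1 * fst q $ 1 * snd a $ 1
        + fst q $ 1 * snd a $ 2 + fst q $ 2 * (snd a $ 1)^2 = 0"
      using mult_coeffs(4)[OF pa pq] m by simp
    have q1: "snd q $ 1 = 1" using e1 a1 by simp
    have q2: "snd q $ 2 = - fst a $ 1" using e2 q1 a1 a2 by (simp add: add_eq_0_iff)
    have q3: "fst q $ 1 = - fst a $ 1" using e3 a1 by (simp add: add_eq_0_iff)
    have "fst q $ 2 = - (fst a $ 2 + fst a $ 1 * fst q $ 1 * snd a $ 1 + fst q $ 1 * snd a $ 2)"
      using e4 a1 by (simp add: eq_neg_iff_add_eq_0 algebra_simps)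
    then have q4: "fst q $ 2 = (fst a $ 1)^2" using q3 a1 a2 a3 by (simp add: power2_eq_square)
    have "R111c q" using pq q1 q2 q3 q4 by (simp add: R111c_def power2_eq_square)
    then show "inv\<^bsub>riordan_group\<^esub> a \<in> R111" by (simp add: R111_eq q_def)
  qed
qed

theorem theorem4p4:
  shows "(group (riordan_group :: (real fps \<times> real fps) monoid)
           \<and> subgroup (R111 :: (real fps \<times> real fps) set) riordan_group)
       \<and> (group (riordan_group :: (complex fps \<times> complex fps) monoid)
           \<and> subgroup (R111 :: (complex fps \<times> complex fps) set) riordan_group)"
  by (intro conjI riordan_is_group R111_subgroup)

end
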